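(* Let $a$ be a spectral measure on $\mathbb S^{n-1}$, let $\Omega\subset\mathbb R^n$ be open and $u\in C^1(\Omega)\cap L^\infty(\mathbb R^n)$. Then for every $x\in\Omega$ and every $r>0$ with $B_{2r}(x)\subset\Omega$, $$\lim_{s\nearrow1}\mathscr M^s_r u(x)=\frac12\Big(\int_{\mathbb S^{n-1}}da\Big)^{-1}\int_{\mathbb S^{n-1}}\big(u(x-r\omega)+u(x+r\omega)\big)\,da(\omega).$$
   Context: A spectral measure is a non-negative finite Borel measure $a$ on $\mathbb S^{n-1}$ with $0<\int_{\mathbb S^{n-1}}da\le\Lambda$. For $s\in(0,1)$, $$\mathscr M^s_r u(x)=c(n,s,a)\,r^{2s}\int_r^\infty d\rho\int_{\mathbb S^{n-1}}da(\omega)\,\frac{u(x+\rho\omega)+u(x-\rho\omega)}{(\rho^2-r^2)^s\rho},\qquad c(n,s,a)=\frac{\sin\pi s}{\pi}\Big(\int_{\mathbb S^{n-1}}da\Big)^{-1}.$$ $B_{2r}(x)$ is the open ball of radius $2r$ centered at $x$. *)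

theory Defs
  imports "HOL-Analysis.Analysis"
begin

definition spectral_measure :: "real \<Rightarrow> 'a::euclidean_space measure \<Rightarrow> bool" where
  "spectral_measure \<Lambda> a \<longleftrightarrow>
     sets a = sets (restrict_space borel (sphere (0::'a) 1)) \<and>
     space a = sphere 0 1 \<and>
     finite_measure a \<and>
     0 < measure a (space a) \<and> measure a (space a) \<le> \<Lambda>"

definition spec_const :: "real \<Rightarrow> 'a::euclidean_space measure \<Rightarrow> real" where
  "spec_const s a = sin (pi * s) / pi * inverse (measure a (space a))"

definition Msr :: "'a::euclidean_space measure \<Rightarrow> real \<Rightarrow> real \<Rightarrow> ('a \<Rightarrow> real) \<Rightarrow> 'a \<Rightarrow> real" where
  "Msr a s r u x = spec_const s a * r powr (2 * s) *
     (LBINT \<rho>:{r<..}. (\<integral>\<omega>. (u (x + \<rho> *\<^sub>R \<omega>) + u (x - \<rho> *\<^sub>R \<omega>)) \<partial>a)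
                        / ((\<rho>\<^sup>2 - r\<^sup>2) powr s * \<rho>))"

end

theory Submission
  imports Defs "HOL-Real_Asymp.Real_Asymp"
begin

lemma DERIV_sqpowr:
  fixes r p x :: real
  assumes "0 < x\<^sup>2 - r\<^sup>2"
  shows "((\<lambda>\<rho>::real. (\<rho>\<^sup>2 - r\<^sup>2) powr p) has_real_derivative (p * (x\<^sup>2 - r\<^sup>2) powr (p - 1) * (2*x))) (at x)"
proof -
  have "DERIV (\<lambda>\<rho>::real. \<rho>\<^sup>2 - r\<^sup>2) x :> 2*x"
    by (auto intro!: derivative_eq_intros)
  from DERIV_fun_powr[OF this assms, of p] show ?thesis by simp
qed

lemma sq_diff_pos: "0 < (r::real) \<Longrightarrow> r < x \<Longrightarrow> 0 < x\<^sup>2 - r\<^sup>2"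
  using power_strict_mono[of r x 2] by simp

lemma near_g:
  fixes r R s :: real
  assumes "0 < r" "r < R" "0 < s" "s < 1"
  shows "set_integrable lborel {r<..<R} (\<lambda>\<rho>. \<rho> * (\<rho>\<^sup>2 - r\<^sup>2) powr (-s))"
    "(LBINT \<rho>:{r<..<R}. \<rho> * (\<rho>\<^sup>2 - r\<^sup>2) powr (-s)) = (R\<^sup>2 - r\<^sup>2) powr (1-s) / (2*(1-s))"
proof -
  let ?F = "\<lambda>\<rho>::real. (\<rho>\<^sup>2 - r\<^sup>2) powr (1-s) / (2*(1-s))"
  let ?f = "\<lambda>\<rho>::real. \<rho> * (\<rho>\<^sup>2 - r\<^sup>2) powr (-s)"
  have D: "DERIV ?F x :> ?f x" if "ereal r < ereal x" "ereal x < ereal R" for x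
  proof -
    from that have x: "r < x" "x < R" by auto
    with assms have pos: "x\<^sup>2 - r\<^sup>2 > 0" using sq_diff_pos[of r x] by linarith
    show ?thesis
      apply (rule DERIV_cong[OF DERIV_cdivide[OF DERIV_sqpowr]])
      using pos assms by (simp_all add: field_simps)
  qed
  have C: "isCont ?f x" if "ereal r < ereal x" "ereal x < ereal R" for x
  proof -
    from that have x: "r < x" "x < R" by auto
    with assms have pos: "x\<^sup>2 - r\<^sup>2 > 0" using sq_diff_pos[of r x] by linarith
    show ?thesis apply (intro continuous_intros) using pos by auto
  qed
  have A: "((?F \<circ> real_of_ereal) \<longlongrightarrow> 0) (at_right (ereal r))"
    unfolding ereal_tendsto_simps
  proof -
    have l: "((\<lambda>\<rho>::real. \<rho>\<^sup>2 - r\<^sup>2) \<longlongrightarrow> 0) (at_right r)"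
      apply (rule tendsto_mono[OF at_le[OF subset_UNIV]])
      apply (rule tendsto_eq_intros refl)+
      by simp
    have ev: "\<forall>\<^sub>F \<rho> in at_right r. 0 \<le> \<rho>\<^sup>2 - r\<^sup>2"
      using eventually_at_right_less[of r]
      by (rule eventually_mono) (use assms sq_diff_pos[of r] in \<open>force\<close>)
    have "((\<lambda>\<rho>::real. (\<rho>\<^sup>2 - r\<^sup>2) powr (1-s)) \<longlongrightarrow> 0) (at_right r)"
      by (rule tendsto_zero_powrI[OF l tendsto_const ev]) (use assms in simp)
    then show "(?F \<longlongrightarrow> 0) (at_right r)"
      using tendsto_divide_zero by blast
  qed
  have B: "((?F \<circ> real_of_ereal) \<longlongrightarrow> ?F R) (at_left (ereal R))"
    unfolding ereal_tendsto_simps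
    apply (rule tendsto_mono[OF at_le[OF subset_UNIV]])
    apply (rule continuous_within[THEN iffD1])
    apply (intro continuous_intros)
    using assms sq_diff_pos[of r R] by auto
  have N: "AE x in lborel. ereal r < ereal x \<longrightarrow> ereal x < ereal R \<longrightarrow> 0 \<le> ?f x"
    using assms by (auto intro!: AE_I2)
  note FTC = interval_integral_FTC_nonneg[of "ereal r" "ereal R" ?F ?f 0 "?F R", OF _ D C N A B]
  show "set_integrable lborel {r<..<R} ?f" using FTC(1) assms by simp
  show "(LBINT \<rho>:{r<..<R}. ?f \<rho>) = ?F R"
    using FTC(2) assms by (simp add: interval_lebesgue_integral_le_eq)
qed

lemma tail_h:
  fixes r R s :: real
  assumes "0 < r" "r < R" "0 < s"
  shows "set_integrable lborel {R<..} (\<lambda>\<rho>. \<rho> * (\<rho>\<^sup>2 - r\<^sup>2) powr (-s-1))"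
    "(LBINT \<rho>:{R<..}. \<rho> * (\<rho>\<^sup>2 - r\<^sup>2) powr (-s-1)) = (R\<^sup>2 - r\<^sup>2) powr (-s) / (2 * s)"
proof -
  let ?F = "\<lambda>\<rho>::real. -((\<rho>\<^sup>2 - r\<^sup>2) powr (-s)) / (2 * s)"
  let ?f = "\<lambda>\<rho>::real. \<rho> * (\<rho>\<^sup>2 - r\<^sup>2) powr (-s-1)"
  have D: "DERIV ?F x :> ?f x" if "ereal R < ereal x" "ereal x < \<infinity>" for x
  proof -
    from that have x: "R < x" by auto
    with assms have pos: "x\<^sup>2 - r\<^sup>2 > 0" using sq_diff_pos[of r x] by linarith
    show ?thesis
      apply (rule DERIV_cong[OF DERIV_cdivide[OF DERIV_minus[OF DERIV_sqpowr]]])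
      using pos assms by (simp_all add: field_simps)
  qed
  have C: "isCont ?f x" if "ereal R < ereal x" "ereal x < \<infinity>" for x
  proof -
    from that have x: "R < x" by auto
    with assms have pos: "x\<^sup>2 - r\<^sup>2 > 0" using sq_diff_pos[of r x] by linarith
    show ?thesis apply (intro continuous_intros) using pos by auto
  qed
  have B: "((?F \<circ> real_of_ereal) \<longlongrightarrow> 0) (at_left \<infinity>)"
    unfolding ereal_tendsto_simps
  proof -
    have l: "filterlim (\<lambda>\<rho>::real. \<rho>\<^sup>2 - r\<^sup>2) at_top at_top"
      by real_asymp
    have L0: "((\<lambda>\<rho>::real. (\<rho>\<^sup>2 - r\<^sup>2) powr (-s)) \<longlongrightarrow> 0) at_top"
      by (rule tendsto_neg_powr[OF _ l]) (use assms in simp)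
    then show "(?F \<longlongrightarrow> 0) at_top"
      using tendsto_divide_zero[OF tendsto_minus[OF L0, simplified], of "2 * s"] by simp
  qed
  have A: "((?F \<circ> real_of_ereal) \<longlongrightarrow> ?F R) (at_right (ereal R))"
    unfolding ereal_tendsto_simps
    apply (rule tendsto_mono[OF at_le[OF subset_UNIV]])
    apply (rule continuous_within[THEN iffD1])
    apply (intro continuous_intros)
    using assms sq_diff_pos[of r R] by auto
  have N: "AE x in lborel. ereal R < ereal x \<longrightarrow> ereal x < \<infinity> \<longrightarrow> 0 \<le> ?f x"
    using assms by (auto intro!: AE_I2)
  note FTC = interval_integral_FTC_nonneg[of "ereal R" "\<infinity>" ?F ?f "?F R" 0, OF _ D C N A B]
  show "set_integrable lborel {R<..} ?f" using FTC(1) assms by simp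
  show "(LBINT \<rho>:{R<..}. ?f \<rho>) = (R\<^sup>2 - r\<^sup>2) powr (-s) / (2 * s)"
    using FTC(2) assms by (simp add: interval_lebesgue_integral_le_eq)
qed

lemma K_eq_g:
  fixes r s \<rho> :: real
  assumes "0 < r" "r < \<rho>"
  shows "1 / ((\<rho>\<^sup>2 - r\<^sup>2) powr s * \<rho>) = \<rho> * (\<rho>\<^sup>2 - r\<^sup>2) powr (-s) / \<rho>\<^sup>2"
proof -
  have "(\<rho>\<^sup>2 - r\<^sup>2) powr s > 0" using sq_diff_pos[OF assms] by simp
  then show ?thesis using assms by (simp add: powr_minus field_simps power2_eq_square)
qed

lemma K_le_h:
  fixes r s \<rho> :: real
  assumes "0 < r" "r < \<rho>"
  shows "1 / ((\<rho>\<^sup>2 - r\<^sup>2) powr s * \<rho>) \<le> \<rho> * (\<rho>\<^sup>2 - r\<^sup>2) powr (-s-1)"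
proof -
  have p: "\<rho>\<^sup>2 - r\<^sup>2 > 0" using sq_diff_pos[OF assms] .
  have e: "(\<rho>\<^sup>2 - r\<^sup>2) powr (-s-1) = (\<rho>\<^sup>2 - r\<^sup>2) powr (-s) / (\<rho>\<^sup>2 - r\<^sup>2)"
    using p by (simp add: powr_diff)
  have "\<rho> * (\<rho>\<^sup>2 - r\<^sup>2) powr (-s) / \<rho>\<^sup>2 \<le> \<rho> * (\<rho>\<^sup>2 - r\<^sup>2) powr (-s) / (\<rho>\<^sup>2 - r\<^sup>2)"
    apply (rule divide_left_mono)
    using p assms by auto
  then show ?thesis using K_eq_g[OF assms, of s] e by simp
qed

lemma sbm_lborel:
  fixes f :: "real \<Rightarrow> real"
  assumes "f \<in> borel_measurable borel" "A \<in> sets borel"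
  shows "set_borel_measurable lborel A f"
  unfolding set_borel_measurable_def using assms by measurable

lemma K_meas: "(\<lambda>\<rho>::real. 1 / ((\<rho>\<^sup>2 - r\<^sup>2) powr s * \<rho>)) \<in> borel_measurable borel"
  by measurable

lemma near_est:
  fixes F :: "real \<Rightarrow> real" and r R s Bd \<eta> :: real
  assumes r: "0 < r" "r < R" and s: "0 < s" "s < 1"
    and Fm: "F \<in> borel_measurable borel"
    and Fb: "\<And>\<rho>. \<bar>F \<rho>\<bar> \<le> Bd"
    and Fe: "\<And>\<rho>. r < \<rho> \<Longrightarrow> \<rho> < R \<Longrightarrow> \<bar>F \<rho> - F r\<bar> \<le> \<eta>"
  shows "set_integrable lborel {r<..<R} (\<lambda>\<rho>. F \<rho> / ((\<rho>\<^sup>2 - r\<^sup>2) powr s * \<rho>))"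
    and "(R\<^sup>2 - r\<^sup>2) powr (1-s) / (2*(1-s)) / R\<^sup>2 \<le> (LBINT \<rho>:{r<..<R}. 1 / ((\<rho>\<^sup>2 - r\<^sup>2) powr s * \<rho>))"
    and "(LBINT \<rho>:{r<..<R}. 1 / ((\<rho>\<^sup>2 - r\<^sup>2) powr s * \<rho>)) \<le> (R\<^sup>2 - r\<^sup>2) powr (1-s) / (2*(1-s)) / r\<^sup>2"
    and "\<bar>(LBINT \<rho>:{r<..<R}. F \<rho> / ((\<rho>\<^sup>2 - r\<^sup>2) powr s * \<rho>)) - F r * (LBINT \<rho>:{r<..<R}. 1 / ((\<rho>\<^sup>2 - r\<^sup>2) powr s * \<rho>))\<bar>
           \<le> \<eta> * (LBINT \<rho>:{r<..<R}. 1 / ((\<rho>\<^sup>2 - r\<^sup>2) powr s * \<rho>))"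
proof -
  define K where "K = (\<lambda>\<rho>::real. 1 / ((\<rho>\<^sup>2 - r\<^sup>2) powr s * \<rho>))"
  define g where "g = (\<lambda>\<rho>::real. \<rho> * (\<rho>\<^sup>2 - r\<^sup>2) powr (-s))"
  have eqFK: "(\<lambda>\<rho>. F \<rho> / ((\<rho>\<^sup>2 - r\<^sup>2) powr s * \<rho>)) = (\<lambda>\<rho>. F \<rho> * K \<rho>)"
    by (auto simp: K_def fun_eq_iff)
  have gi: "set_integrable lborel {r<..<R} g" unfolding g_def using near_g[OF r s] by simp
  have gv: "(LBINT \<rho>:{r<..<R}. g \<rho>) = (R\<^sup>2 - r\<^sup>2) powr (1-s) / (2*(1-s))"
    unfolding g_def using near_g[OF r s] by simp
  have Km: "K \<in> borel_measurable borel" unfolding K_def by (rule K_meas)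
  have Kpos: "0 \<le> K \<rho>" if "r < \<rho>" for \<rho>
    unfolding K_def using that r by auto
  have gpos: "0 \<le> g \<rho>" if "r < \<rho>" for \<rho>
    unfolding g_def using that r by auto
  have Kup: "K \<rho> \<le> g \<rho> / r\<^sup>2" if "r < \<rho>" for \<rho>
  proof -
    have "K \<rho> = g \<rho> / \<rho>\<^sup>2" unfolding K_def g_def using K_eq_g[OF r(1) that] by simp
    also have "\<dots> \<le> g \<rho> / r\<^sup>2"
      apply (rule divide_left_mono[OF _ gpos[OF that]])
      using that r by (auto intro: power_mono)
    finally show ?thesis .
  qed
  have Klo: "g \<rho> / R\<^sup>2 \<le> K \<rho>" if "r < \<rho>" "\<rho> < R" for \<rho>
  proof -
    have "K \<rho> = g \<rho> / \<rho>\<^sup>2" unfolding K_def g_def using K_eq_g[OF r(1) that(1)] by simp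
    moreover have "g \<rho> / R\<^sup>2 \<le> g \<rho> / \<rho>\<^sup>2"
      apply (rule divide_left_mono[OF _ gpos[OF that(1)]])
      using that r by (auto intro: power_mono)
    ultimately show ?thesis by simp
  qed
  have Ki: "set_integrable lborel {r<..<R} K"
    apply (rule set_integrable_bound[OF set_integrable_divide[OF gi, of "r\<^sup>2"]])
     apply (rule sbm_lborel[OF Km]; simp)
    apply (rule AE_I2)
    using Kup Kpos gpos by (auto simp: abs_of_nonneg)
  have Bd0: "0 \<le> Bd" using Fb[of 0] by simp
  have FKi: "set_integrable lborel {r<..<R} (\<lambda>\<rho>. F \<rho> * K \<rho>)"
    apply (rule set_integrable_bound[OF set_integrable_mult_right[OF Ki, of Bd]])
     apply (rule sbm_lborel[OF borel_measurable_times[OF Fm Km]]; simp)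
    apply (rule AE_I2)
    using Kpos Fb Bd0 by (auto simp: abs_mult intro!: mult_right_mono)
  then show "set_integrable lborel {r<..<R} (\<lambda>\<rho>. F \<rho> / ((\<rho>\<^sup>2 - r\<^sup>2) powr s * \<rho>))"
    by (simp add: eqFK)
  have "(LBINT \<rho>:{r<..<R}. g \<rho> / R\<^sup>2) \<le> (LBINT \<rho>:{r<..<R}. K \<rho>)"
    by (rule set_integral_mono[OF set_integrable_divide[OF gi] Ki]) (use Klo in auto)
  then show "(R\<^sup>2 - r\<^sup>2) powr (1-s) / (2*(1-s)) / R\<^sup>2 \<le> (LBINT \<rho>:{r<..<R}. 1 / ((\<rho>\<^sup>2 - r\<^sup>2) powr s * \<rho>))"
    by (simp add: gv K_def)
  have "(LBINT \<rho>:{r<..<R}. K \<rho>) \<le> (LBINT \<rho>:{r<..<R}. g \<rho> / r\<^sup>2)"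
    by (rule set_integral_mono[OF Ki set_integrable_divide[OF gi]]) (use Kup in auto)
  then show "(LBINT \<rho>:{r<..<R}. 1 / ((\<rho>\<^sup>2 - r\<^sup>2) powr s * \<rho>)) \<le> (R\<^sup>2 - r\<^sup>2) powr (1-s) / (2*(1-s)) / r\<^sup>2"
    by (simp add: gv K_def)
  have FrKi: "set_integrable lborel {r<..<R} (\<lambda>\<rho>. F r * K \<rho>)"
    using Ki by auto
  have d: "(LBINT \<rho>:{r<..<R}. F \<rho> * K \<rho>) - F r * (LBINT \<rho>:{r<..<R}. K \<rho>)
      = (LBINT \<rho>:{r<..<R}. F \<rho> * K \<rho> - F r * K \<rho>)"
    using set_integral_diff(2)[OF FKi FrKi] by simp
  have DKi: "set_integrable lborel {r<..<R} (\<lambda>\<rho>. F \<rho> * K \<rho> - F r * K \<rho>)"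
    using set_integral_diff(1)[OF FKi FrKi] .
  have etaKi: "set_integrable lborel {r<..<R} (\<lambda>\<rho>. \<eta> * K \<rho>)"
    using Ki by auto
  have pw: "\<bar>F \<rho> * K \<rho> - F r * K \<rho>\<bar> \<le> \<eta> * K \<rho>" if "\<rho> \<in> {r<..<R}" for \<rho>
  proof -
    have "\<bar>F \<rho> * K \<rho> - F r * K \<rho>\<bar> = \<bar>F \<rho> - F r\<bar> * K \<rho>"
      using Kpos[of \<rho>] that by (simp add: abs_mult left_diff_distrib[symmetric])
    also have "\<dots> \<le> \<eta> * K \<rho>"
      using Fe[of \<rho>] Kpos[of \<rho>] that by (auto intro: mult_right_mono)
    finally show ?thesis .
  qed
  have u: "(LBINT \<rho>:{r<..<R}. F \<rho> * K \<rho> - F r * K \<rho>) \<le> (LBINT \<rho>:{r<..<R}. \<eta> * K \<rho>)"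
    by (rule set_integral_mono[OF DKi etaKi]) (use pw in force)
  have l: "(LBINT \<rho>:{r<..<R}. - (\<eta> * K \<rho>)) \<le> (LBINT \<rho>:{r<..<R}. F \<rho> * K \<rho> - F r * K \<rho>)"
    apply (rule set_integral_mono[OF _ DKi])
    using set_integrable_mult_right[OF Ki, of "-\<eta>"] apply simp
    subgoal for \<rho> using pw[of \<rho>] by (simp add: abs_le_iff)
    done
  have l': "(LBINT \<rho>:{r<..<R}. - (\<eta> * K \<rho>)) = - (\<eta> * (LBINT \<rho>:{r<..<R}. K \<rho>))"
    using set_integral_uminus[OF etaKi] by simp
  show "\<bar>(LBINT \<rho>:{r<..<R}. F \<rho> / ((\<rho>\<^sup>2 - r\<^sup>2) powr s * \<rho>)) - F r * (LBINT \<rho>:{r<..<R}. 1 / ((\<rho>\<^sup>2 - r\<^sup>2) powr s * \<rho>))\<bar>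
           \<le> \<eta> * (LBINT \<rho>:{r<..<R}. 1 / ((\<rho>\<^sup>2 - r\<^sup>2) powr s * \<rho>))"
  proof -
    have fin: "\<bar>(LBINT \<rho>:{r<..<R}. F \<rho> * K \<rho>) - F r * (LBINT \<rho>:{r<..<R}. K \<rho>)\<bar>
           \<le> \<eta> * (LBINT \<rho>:{r<..<R}. K \<rho>)"
      using d u l l' by (simp add: abs_le_iff)
    show ?thesis unfolding eqFK K_def[symmetric] using fin .
  qed
qed

lemma tail_est:
  fixes F :: "real \<Rightarrow> real" and r R s Bd :: real
  assumes r: "0 < r" "r < R" and s: "0 < s"
    and Fm: "F \<in> borel_measurable borel"
    and Fb: "\<And>\<rho>. \<bar>F \<rho>\<bar> \<le> Bd"
  shows "set_integrable lborel {R<..} (\<lambda>\<rho>. F \<rho> / ((\<rho>\<^sup>2 - r\<^sup>2) powr s * \<rho>))"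
    and "\<bar>LBINT \<rho>:{R<..}. F \<rho> / ((\<rho>\<^sup>2 - r\<^sup>2) powr s * \<rho>)\<bar> \<le> Bd * ((R\<^sup>2 - r\<^sup>2) powr (-s) / (2 * s))"
proof -
  define K where "K = (\<lambda>\<rho>::real. 1 / ((\<rho>\<^sup>2 - r\<^sup>2) powr s * \<rho>))"
  define h where "h = (\<lambda>\<rho>::real. \<rho> * (\<rho>\<^sup>2 - r\<^sup>2) powr (-s-1))"
  have eqFK: "(\<lambda>\<rho>. F \<rho> / ((\<rho>\<^sup>2 - r\<^sup>2) powr s * \<rho>)) = (\<lambda>\<rho>. F \<rho> * K \<rho>)"
    by (auto simp: K_def fun_eq_iff)
  have hi: "set_integrable lborel {R<..} h" unfolding h_def using tail_h[OF r s] by simp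
  have hv: "(LBINT \<rho>:{R<..}. h \<rho>) = (R\<^sup>2 - r\<^sup>2) powr (-s) / (2 * s)"
    unfolding h_def using tail_h[OF r s] by simp
  have Km: "K \<in> borel_measurable borel" unfolding K_def by (rule K_meas)
  have Kpos: "0 \<le> K \<rho>" if "r < \<rho>" for \<rho>
    unfolding K_def using that r by auto
  have Kup: "K \<rho> \<le> h \<rho>" if "R < \<rho>" for \<rho>
    unfolding K_def h_def using K_le_h[OF r(1), of \<rho> s] that r by simp
  have Bd0: "0 \<le> Bd" using Fb[of 0] by simp
  have pw: "\<bar>F \<rho> * K \<rho>\<bar> \<le> Bd * h \<rho>" if "\<rho> \<in> {R<..}" for \<rho>
  proof -
    have "\<bar>F \<rho> * K \<rho>\<bar> = \<bar>F \<rho>\<bar> * K \<rho>" using Kpos[of \<rho>] that r by (simp add: abs_mult)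
    also have "\<dots> \<le> Bd * h \<rho>"
      using Fb[of \<rho>] Kpos[of \<rho>] Kup[of \<rho>] that r Bd0 by (auto intro: mult_mono)
    finally show ?thesis .
  qed
  have Bhi: "set_integrable lborel {R<..} (\<lambda>\<rho>. Bd * h \<rho>)" using hi by auto
  have FKi: "set_integrable lborel {R<..} (\<lambda>\<rho>. F \<rho> * K \<rho>)"
    apply (rule set_integrable_bound[OF Bhi])
     apply (rule sbm_lborel[OF borel_measurable_times[OF Fm Km]]; simp)
    apply (rule AE_I2)
    using pw by (auto intro: order_trans[OF _ abs_ge_self])
  then show "set_integrable lborel {R<..} (\<lambda>\<rho>. F \<rho> / ((\<rho>\<^sup>2 - r\<^sup>2) powr s * \<rho>))"
    by (simp add: eqFK)
  have u: "(LBINT \<rho>:{R<..}. F \<rho> * K \<rho>) \<le> (LBINT \<rho>:{R<..}. Bd * h \<rho>)"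
    apply (rule set_integral_mono[OF FKi Bhi])
    subgoal for \<rho> using pw[of \<rho>] by (simp add: abs_le_iff)
    done
  have l: "(LBINT \<rho>:{R<..}. - (Bd * h \<rho>)) \<le> (LBINT \<rho>:{R<..}. F \<rho> * K \<rho>)"
    apply (rule set_integral_mono[OF _ FKi])
    using set_integrable_mult_right[OF hi, of "-Bd"] apply simp
    subgoal for \<rho> using pw[of \<rho>] by (simp add: abs_le_iff)
    done
  have l': "(LBINT \<rho>:{R<..}. - (Bd * h \<rho>)) = - (Bd * (LBINT \<rho>:{R<..}. h \<rho>))"
    using set_integral_uminus[OF Bhi] by simp
  have fin: "\<bar>LBINT \<rho>:{R<..}. F \<rho> * K \<rho>\<bar> \<le> Bd * ((R\<^sup>2 - r\<^sup>2) powr (-s) / (2 * s))"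
    using u l l' hv by (simp add: abs_le_iff)
  show "\<bar>LBINT \<rho>:{R<..}. F \<rho> / ((\<rho>\<^sup>2 - r\<^sup>2) powr s * \<rho>)\<bar> \<le> Bd * ((R\<^sup>2 - r\<^sup>2) powr (-s) / (2 * s))"
    unfolding eqFK using fin .
qed

lemma split_int:
  fixes f :: "real \<Rightarrow> real" and r R :: real
  assumes "r < R" "set_integrable lborel {r<..<R} f" "set_integrable lborel {R<..} f"
  shows "set_integrable lborel {r<..} f"
    "(LBINT \<rho>:{r<..}. f \<rho>) = (LBINT \<rho>:{r<..<R}. f \<rho>) + (LBINT \<rho>:{R<..}. f \<rho>)"
proof -
  have U: "set_integrable lborel ({r<..<R} \<union> {R<..}) f"
    by (rule set_integrable_Un[OF assms(2,3)]) auto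
  have diff: "({r<..} - ({r<..<R} \<union> {R<..})) \<union> (({r<..<R} \<union> {R<..}) - {r<..}) \<subseteq> {R}"
    using assms(1) by auto
  show "set_integrable lborel {r<..} f"
    using U set_integrable_discrete_difference[of "{R}" "{r<..}" "{r<..<R} \<union> {R<..}" lborel f, OF _ diff]
    by simp
  have "(LBINT \<rho>:{r<..}. f \<rho>) = (LBINT \<rho>:({r<..<R} \<union> {R<..}). f \<rho>)"
    using set_integral_discrete_difference[of "{R}" "{r<..}" "{r<..<R} \<union> {R<..}" lborel f, OF _ diff]
    by simp
  also have "\<dots> = (LBINT \<rho>:{r<..<R}. f \<rho>) + (LBINT \<rho>:{R<..}. f \<rho>)"
    by (rule set_integral_Un[OF _ assms(2,3)]) auto
  finally show "(LBINT \<rho>:{r<..}. f \<rho>) = (LBINT \<rho>:{r<..<R}. f \<rho>) + (LBINT \<rho>:{R<..}. f \<rho>)" .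
qed

lemma Q_lim: "((\<lambda>s::real. sin (pi * s) / (pi * (1 - s))) \<longlongrightarrow> 1) (at_left 1)"
  by real_asymp

lemma lim_UL:
  fixes r R c :: real
  assumes "0 < r" "r < R" "0 < c"
  shows "((\<lambda>s. sin (pi * s) / pi * r powr (2 * s) * ((R\<^sup>2 - r\<^sup>2) powr (1 - s) / (2 * (1 - s)) / c))
          \<longlongrightarrow> r\<^sup>2 / (2 * c)) (at_left 1)"
proof -
  have p: "R\<^sup>2 - r\<^sup>2 > 0" using sq_diff_pos[OF assms(1,2)] .
  have "((\<lambda>s. r powr (2 * s) * (R\<^sup>2 - r\<^sup>2) powr (1 - s) / (2 * c))
      \<longlongrightarrow> r powr (2 * 1) * (R\<^sup>2 - r\<^sup>2) powr (1 - 1) / (2 * c)) (at_left 1)"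
    apply (intro tendsto_intros)
    using assms p by auto
  then have L2: "((\<lambda>s. r powr (2 * s) * (R\<^sup>2 - r\<^sup>2) powr (1 - s) / (2 * c))
      \<longlongrightarrow> r\<^sup>2 / (2 * c)) (at_left 1)"
    using assms p by simp
  have "((\<lambda>s. sin (pi * s) / (pi * (1 - s)) * (r powr (2 * s) * (R\<^sup>2 - r\<^sup>2) powr (1 - s) / (2 * c)))
      \<longlongrightarrow> r\<^sup>2 / (2 * c)) (at_left 1)"
    using tendsto_mult[OF Q_lim L2] by simp
  then show ?thesis
  proof (rule Lim_transform_eventually)
    show "\<forall>\<^sub>F s in at_left 1. sin (pi * s) / (pi * (1 - s)) * (r powr (2 * s) * (R\<^sup>2 - r\<^sup>2) powr (1 - s) / (2 * c))
       = sin (pi * s) / pi * r powr (2 * s) * ((R\<^sup>2 - r\<^sup>2) powr (1 - s) / (2 * (1 - s)) / c)"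
      using eventually_at_left_real[of 0 1]
      by (rule eventually_mono) (auto simp: field_simps)
  qed
qed

lemma lim_T:
  fixes r R Bd :: real
  assumes "0 < r" "r < R"
  shows "((\<lambda>s. sin (pi * s) / pi * r powr (2 * s) * (Bd * ((R\<^sup>2 - r\<^sup>2) powr (-s) / (2 * s))))
          \<longlongrightarrow> 0) (at_left 1)"
proof -
  have p: "R\<^sup>2 - r\<^sup>2 > 0" using sq_diff_pos[OF assms(1,2)] .
  have "((\<lambda>s. sin (pi * s) / pi * r powr (2 * s) * (Bd * ((R\<^sup>2 - r\<^sup>2) powr (-s) / (2 * s))))
          \<longlongrightarrow> sin (pi * 1) / pi * r powr (2 * 1) * (Bd * ((R\<^sup>2 - r\<^sup>2) powr (-1) / (2 * 1)))) (at_left 1)"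
    apply (intro tendsto_intros)
    using assms p by auto
  then show ?thesis by simp
qed

lemma kernel_limit:
  fixes F :: "real \<Rightarrow> real" and r Bd :: real
  assumes r: "0 < r" and Fm: "F \<in> borel_measurable borel" and Fb: "\<And>\<rho>. \<bar>F \<rho>\<bar> \<le> Bd"
    and Fc: "(F \<longlongrightarrow> F r) (at_right r)"
  shows "((\<lambda>s. sin (pi * s) / pi * r powr (2 * s) *
             (LBINT \<rho>:{r<..}. F \<rho> / ((\<rho>\<^sup>2 - r\<^sup>2) powr s * \<rho>))) \<longlongrightarrow> F r / 2) (at_left 1)"
proof (rule tendstoI)
  fix e :: real assume e: "0 < e"
  define C where "C = \<bar>F r\<bar> + 1"
  define \<delta> where "\<delta> = min (1/4) (e / (8 * C))"
  define \<eta> where "\<eta> = e / 4"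
  have C: "0 < C" unfolding C_def by simp
  have d0: "0 < \<delta>" unfolding \<delta>_def using e C by simp
  have d1: "\<delta> \<le> 1/4" unfolding \<delta>_def by simp
  have d2: "2 * \<delta> * \<bar>F r\<bar> \<le> e / 4"
  proof -
    have "\<delta> \<le> e / (8 * C)" unfolding \<delta>_def by simp
    then have "2 * \<delta> * \<bar>F r\<bar> \<le> 2 * (e / (8 * C)) * \<bar>F r\<bar>"
      by (intro mult_right_mono) auto
    also have "\<dots> = e / 4 * (\<bar>F r\<bar> / C)" using C by (simp add: field_simps)
    also have "\<dots> \<le> e / 4 * 1"
      using e C unfolding C_def by (intro mult_left_mono) auto
    finally show ?thesis by simp
  qed
  have eta: "0 < \<eta>" unfolding \<eta>_def using e by simp
  have "\<forall>\<^sub>F \<rho> in at_right r. dist (F \<rho>) (F r) < \<eta>"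
    by (rule tendstoD[OF Fc eta])
  then obtain b1 where b1: "b1 > r" "\<And>\<rho>. r < \<rho> \<Longrightarrow> \<rho> < b1 \<Longrightarrow> dist (F \<rho>) (F r) < \<eta>"
    unfolding eventually_at_right_field by blast
  have "((\<lambda>R. r\<^sup>2 / (2 * R\<^sup>2)) \<longlongrightarrow> r\<^sup>2 / (2 * r\<^sup>2)) (at_right r)"
    apply (rule tendsto_mono[OF at_le[OF subset_UNIV]])
    apply (intro tendsto_intros)
    using r by auto
  then have "((\<lambda>R. r\<^sup>2 / (2 * R\<^sup>2)) \<longlongrightarrow> 1/2) (at_right r)" using r by simp
  then have "\<forall>\<^sub>F R in at_right r. 1/2 - \<delta> < r\<^sup>2 / (2 * R\<^sup>2)"
    by (rule order_tendstoD) (use d0 in simp)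
  then obtain b2 where b2: "b2 > r" "\<And>R. r < R \<Longrightarrow> R < b2 \<Longrightarrow> 1/2 - \<delta> < r\<^sup>2 / (2 * R\<^sup>2)"
    unfolding eventually_at_right_field by blast
  define R where "R = (r + min b1 b2) / 2"
  have R: "r < R" "R < b1" "R < b2" unfolding R_def using b1 b2 by auto
  have Fe: "\<bar>F \<rho> - F r\<bar> \<le> \<eta>" if "r < \<rho>" "\<rho> < R" for \<rho>
    using b1(2)[of \<rho>] that R by (simp add: dist_real_def)
  have rR: "1/2 - \<delta> < r\<^sup>2 / (2 * R\<^sup>2)" using b2(2) R by simp
  have R0: "0 < R\<^sup>2" using R r by simp
  have ev1: "\<forall>\<^sub>F s in at_left 1. s \<in> {1/2<..<(1::real)}"
    by (rule eventually_at_left_real) simp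
  have ev2: "\<forall>\<^sub>F s in at_left 1. sin (pi * s) / pi * r powr (2 * s) * ((R\<^sup>2 - r\<^sup>2) powr (1 - s) / (2 * (1 - s)) / r\<^sup>2) < 1/2 + \<delta>"
    apply (rule order_tendstoD(2)[OF lim_UL[OF r R(1), of "r\<^sup>2"]])
    using r d0 by auto
  have ev3: "\<forall>\<^sub>F s in at_left 1. r\<^sup>2 / (2 * R\<^sup>2) - \<delta> < sin (pi * s) / pi * r powr (2 * s) * ((R\<^sup>2 - r\<^sup>2) powr (1 - s) / (2 * (1 - s)) / R\<^sup>2)"
    apply (rule order_tendstoD(1)[OF lim_UL[OF r R(1), of "R\<^sup>2"]])
    using R0 d0 by auto
  have ev4: "\<forall>\<^sub>F s in at_left 1. sin (pi * s) / pi * r powr (2 * s) * (Bd * ((R\<^sup>2 - r\<^sup>2) powr (-s) / (2 * s))) < e / 4"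
    apply (rule order_tendstoD(2)[OF lim_T[OF r R(1), of Bd]])
    using e by auto
  show "\<forall>\<^sub>F s in at_left 1. dist (sin (pi * s) / pi * r powr (2 * s) *
             (LBINT \<rho>:{r<..}. F \<rho> / ((\<rho>\<^sup>2 - r\<^sup>2) powr s * \<rho>))) (F r / 2) < e"
    using ev1 ev2 ev3 ev4
  proof eventually_elim
    case (elim s)
    then have s: "0 < s" "s < 1" by auto
    define P where "P = sin (pi * s) / pi * r powr (2 * s)"
    have "0 \<le> sin (pi * s)" by (rule sin_ge_zero) (use s in auto)
    then have P0: "0 \<le> P" unfolding P_def by simp
    define Ik where "Ik = (LBINT \<rho>:{r<..<R}. 1 / ((\<rho>\<^sup>2 - r\<^sup>2) powr s * \<rho>))"
    define N where "N = (LBINT \<rho>:{r<..<R}. F \<rho> / ((\<rho>\<^sup>2 - r\<^sup>2) powr s * \<rho>))"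
    define T where "T = (LBINT \<rho>:{R<..}. F \<rho> / ((\<rho>\<^sup>2 - r\<^sup>2) powr s * \<rho>))"
    define I where "I = (R\<^sup>2 - r\<^sup>2) powr (1 - s) / (2 * (1 - s))"
    note ne = near_est[OF r R(1) s Fm Fb Fe]
    note te = tail_est[OF r R(1) s(1) Fm Fb]
    have J: "(LBINT \<rho>:{r<..}. F \<rho> / ((\<rho>\<^sup>2 - r\<^sup>2) powr s * \<rho>)) = N + T"
      unfolding N_def T_def by (rule split_int(2)[OF R(1) ne(1) te(1)])
    have Ik1: "I / R\<^sup>2 \<le> Ik" unfolding I_def Ik_def using ne(2) .
    have Ik2: "Ik \<le> I / r\<^sup>2" unfolding I_def Ik_def using ne(3) .
    have NI: "\<bar>N - F r * Ik\<bar> \<le> \<eta> * Ik" unfolding N_def Ik_def using ne(4) .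
    have TB: "\<bar>T\<bar> \<le> Bd * ((R\<^sup>2 - r\<^sup>2) powr (-s) / (2 * s))" unfolding T_def using te(2) .
    have PIk1: "P * Ik < 1/2 + \<delta>"
    proof -
      have "P * Ik \<le> P * (I / r\<^sup>2)" using Ik2 P0 by (rule mult_left_mono)
      also have "\<dots> < 1/2 + \<delta>" using elim unfolding P_def I_def by simp
      finally show ?thesis .
    qed
    have PIk2: "1/2 - 2 * \<delta> < P * Ik"
    proof -
      have "1/2 - 2 * \<delta> < r\<^sup>2 / (2 * R\<^sup>2) - \<delta>" using rR by simp
      also have "\<dots> < P * (I / R\<^sup>2)" using elim unfolding P_def I_def by simp
      also have "\<dots> \<le> P * Ik" using Ik1 P0 by (rule mult_left_mono)
      finally show ?thesis .
    qed
    have Ik0: "0 \<le> P * Ik" using PIk2 d1 by simp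
    have A1: "\<bar>F r * (P * Ik - 1/2)\<bar> \<le> e / 4"
    proof -
      have "\<bar>P * Ik - 1/2\<bar> \<le> 2 * \<delta>" using PIk1 PIk2 d0 by simp
      then have "\<bar>F r * (P * Ik - 1/2)\<bar> \<le> \<bar>F r\<bar> * (2 * \<delta>)"
        by (simp add: abs_mult mult_left_mono)
      then show ?thesis using d2 by (simp add: mult_ac)
    qed
    have A2: "\<bar>P * (N - F r * Ik)\<bar> \<le> e / 4"
    proof -
      have "\<bar>P * (N - F r * Ik)\<bar> = P * \<bar>N - F r * Ik\<bar>" using P0 by (simp add: abs_mult)
      also have "\<dots> \<le> P * (\<eta> * Ik)" using NI P0 by (rule mult_left_mono)
      also have "\<dots> = \<eta> * (P * Ik)" by simp
      also have "\<dots> \<le> \<eta> * 1" using PIk1 d1 eta by (intro mult_left_mono) auto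
      finally show ?thesis unfolding \<eta>_def by simp
    qed
    have A3: "\<bar>P * T\<bar> < e / 4"
    proof -
      have "\<bar>P * T\<bar> = P * \<bar>T\<bar>" using P0 by (simp add: abs_mult)
      also have "\<dots> \<le> P * (Bd * ((R\<^sup>2 - r\<^sup>2) powr (-s) / (2 * s)))" using TB P0 by (rule mult_left_mono)
      also have "\<dots> < e / 4" using elim unfolding P_def by simp
      finally show ?thesis .
    qed
    have eq: "P * (N + T) - F r / 2 = F r * (P * Ik - 1/2) + P * (N - F r * Ik) + P * T"
      by (simp add: algebra_simps)
    have "\<bar>P * (N + T) - F r / 2\<bar> < e"
      unfolding eq using A1 A2 A3 e by linarith
    then show ?case unfolding J P_def[symmetric] by (simp add: dist_real_def)
  qed
qed
lemma int_bound:
  fixes M :: "'a::euclidean_space measure" and h :: "'a \<Rightarrow> real"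
  assumes "finite_measure M" "integrable M h" "\<And>\<omega>. \<omega> \<in> space M \<Longrightarrow> \<bar>h \<omega>\<bar> \<le> c"
  shows "\<bar>\<integral>\<omega>. h \<omega> \<partial>M\<bar> \<le> c * measure M (space M)"
proof -
  interpret finite_measure M by fact
  have "\<bar>\<integral>\<omega>. h \<omega> \<partial>M\<bar> \<le> (\<integral>\<omega>. c \<partial>M)"
    by (rule integral_abs_bound_integral) (use assms in auto)
  then show ?thesis by (simp add: mult.commute)
qed

theorem proposition5p2:
  fixes a :: "'a::euclidean_space measure" and \<Lambda> :: real
    and \<Omega> :: "'a set" and u :: "'a \<Rightarrow> real" and x :: 'a and r :: real
  assumes "spectral_measure \<Lambda> a"
    and "open \<Omega>"
    and "\<exists>D :: 'a \<Rightarrow> 'a \<Rightarrow>\<^sub>L real. (\<forall>y\<in>\<Omega>. (u has_derivative blinfun_apply (D y)) (at y))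
                                  \<and> continuous_on \<Omega> D"
    and "u \<in> borel_measurable borel" and "bounded (range u)"
    and "x \<in> \<Omega>" and "r > 0" and "ball x (2 * r) \<subseteq> \<Omega>"
  shows "((\<lambda>s. Msr a s r u x) \<longlongrightarrow>
           1/2 * inverse (measure a (space a)) *
             (\<integral>\<omega>. (u (x - r *\<^sub>R \<omega>) + u (x + r *\<^sub>R \<omega>)) \<partial>a)) (at_left 1)"
proof -
  note sm = assms(1)[unfolded spectral_measure_def]
  have sets_a: "sets a = sets (restrict_space borel (sphere (0::'a) 1))" using sm by blast
  have space_a: "space a = sphere 0 1" using sm by blast
  interpret fm: finite_measure a using sm by blast
  define A where "A = measure a (space a)"
  have A0: "0 < A" unfolding A_def using sm by blast
  have um[measurable]: "u \<in> borel_measurable borel" by fact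
  obtain B where B: "\<And>y. \<bar>u y\<bar> \<le> B"
    using assms(5) unfolding bounded_iff by auto
  have ida[measurable]: "(\<lambda>\<omega>. \<omega>) \<in> measurable a borel"
  proof -
    have "(\<lambda>\<omega>::'a. \<omega>) \<in> measurable (restrict_space borel (sphere (0::'a) 1)) borel"
      by (rule measurable_restrict_space1) simp
    moreover have "measurable a borel = measurable (restrict_space borel (sphere (0::'a) 1)) borel"
      by (rule measurable_cong_sets) (use sets_a in auto)
    ultimately show ?thesis by metis
  qed
  define g where "g = (\<lambda>\<rho> \<omega>. u (x + \<rho> *\<^sub>R \<omega>) + u (x - \<rho> *\<^sub>R \<omega>))"
  define F where "F = (\<lambda>\<rho>. \<integral>\<omega>. g \<rho> \<omega> \<partial>a)"
  have gm: "g \<rho> \<in> borel_measurable a" for \<rho>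
    unfolding g_def by measurable
  have gjm: "case_prod g \<in> borel_measurable (borel \<Otimes>\<^sub>M a)"
    unfolding g_def by measurable
  have gb: "\<bar>g \<rho> \<omega>\<bar> \<le> 2 * B" for \<rho> \<omega>
    unfolding g_def using B[of "x + \<rho> *\<^sub>R \<omega>"] B[of "x - \<rho> *\<^sub>R \<omega>"] by linarith
  have gi: "integrable a (g \<rho>)" for \<rho>
    by (rule fm.integrable_const_bound[where B="2 * B"]) (use gb gm in auto)
  have Fm: "F \<in> borel_measurable borel"
    unfolding F_def using gjm by (rule fm.borel_measurable_lebesgue_integral)
  have Fb: "\<bar>F \<rho>\<bar> \<le> 2 * B * A" for \<rho>
    unfolding F_def A_def by (rule int_bound[OF fm.finite_measure_axioms gi]) (use gb in auto)
  define K where "K = cball x (3 * r / 2)"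
  have KO: "K \<subseteq> \<Omega>"
    using assms(7,8) unfolding K_def by (auto simp: subset_iff)
  obtain D :: "'a \<Rightarrow> 'a \<Rightarrow>\<^sub>L real" where D: "\<forall>y\<in>\<Omega>. (u has_derivative blinfun_apply (D y)) (at y)"
    using assms(3) by blast
  have uc: "continuous_on K u"
  proof (rule continuous_at_imp_continuous_on, rule ballI)
    fix y assume "y \<in> K"
    then have "y \<in> \<Omega>" using KO by auto
    then show "isCont u y" using D has_derivative_continuous by blast
  qed
  have uu: "uniformly_continuous_on K u"
    by (rule compact_uniformly_continuous[OF uc]) (simp add: K_def)
  have Fc: "(F \<longlongrightarrow> F r) (at_right r)"
  proof (rule tendstoI)
    fix e :: real assume e: "0 < e"
    define e' where "e' = e / (4 * A)"
    have e': "0 < e'" unfolding e'_def using e A0 by simp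
    obtain d where d: "0 < d" "\<And>y y'. y \<in> K \<Longrightarrow> y' \<in> K \<Longrightarrow> dist y' y < d \<Longrightarrow> dist (u y') (u y) < e'"
      using uu e' unfolding uniformly_continuous_on_def by metis
    show "\<forall>\<^sub>F \<rho> in at_right r. dist (F \<rho>) (F r) < e"
      unfolding eventually_at_right_field
    proof (intro exI[of _ "r + min d (r/2)"] conjI allI impI)
      show "r < r + min d (r/2)" using d assms(7) by simp
      fix \<rho> assume \<rho>: "r < \<rho>" "\<rho> < r + min d (r/2)"
      have pw: "\<bar>g \<rho> \<omega> - g r \<omega>\<bar> \<le> 2 * e'" if "\<omega> \<in> space a" for \<omega>
      proof -
        have n1: "norm \<omega> = 1" using that space_a by simp
        have k1: "x + \<rho> *\<^sub>R \<omega> \<in> K" "x + r *\<^sub>R \<omega> \<in> K" "x - \<rho> *\<^sub>R \<omega> \<in> K" "x - r *\<^sub>R \<omega> \<in> K"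
          unfolding K_def using n1 \<rho> assms(7) by (auto simp: dist_norm)
        have "norm ((\<rho> - r) *\<^sub>R \<omega>) < d" using n1 \<rho> by simp
        then have d1: "dist (x + \<rho> *\<^sub>R \<omega>) (x + r *\<^sub>R \<omega>) < d" "dist (x - \<rho> *\<^sub>R \<omega>) (x - r *\<^sub>R \<omega>) < d"
          by (simp_all add: dist_norm algebra_simps norm_minus_commute)
        have "dist (u (x + \<rho> *\<^sub>R \<omega>)) (u (x + r *\<^sub>R \<omega>)) < e'"
          using d(2)[OF k1(2) k1(1) d1(1)] .
        moreover have "dist (u (x - \<rho> *\<^sub>R \<omega>)) (u (x - r *\<^sub>R \<omega>)) < e'"
          using d(2)[OF k1(4) k1(3) d1(2)] .
        ultimately show ?thesis unfolding g_def dist_real_def by linarith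
      qed
      have "F \<rho> - F r = (\<integral>\<omega>. (g \<rho> \<omega> - g r \<omega>) \<partial>a)"
        unfolding F_def by (rule Bochner_Integration.integral_diff[OF gi gi, symmetric])
      moreover have "\<bar>\<integral>\<omega>. (g \<rho> \<omega> - g r \<omega>) \<partial>a\<bar> \<le> (2 * e') * A"
        unfolding A_def by (rule int_bound[OF fm.finite_measure_axioms]) (use pw gi in auto)
      moreover have "(2 * e') * A < e" unfolding e'_def using A0 e by simp
      ultimately show "dist (F \<rho>) (F r) < e" by (simp add: dist_real_def)
    qed
  qed
  have lim: "((\<lambda>s. sin (pi * s) / pi * r powr (2 * s) *
             (LBINT \<rho>:{r<..}. F \<rho> / ((\<rho>\<^sup>2 - r\<^sup>2) powr s * \<rho>))) \<longlongrightarrow> F r / 2) (at_left 1)"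
    by (rule kernel_limit[OF assms(7) Fm Fb Fc])

  have e1: "(\<lambda>s. Msr a s r u x) = (\<lambda>s. inverse A * (sin (pi * s) / pi * r powr (2 * s) *
             (LBINT \<rho>:{r<..}. F \<rho> / ((\<rho>\<^sup>2 - r\<^sup>2) powr s * \<rho>))))"
    unfolding Msr_def spec_const_def F_def g_def A_def by (simp add: fun_eq_iff mult_ac)
  have e2: "1/2 * inverse (measure a (space a)) *
             (\<integral>\<omega>. (u (x - r *\<^sub>R \<omega>) + u (x + r *\<^sub>R \<omega>)) \<partial>a) = inverse A * (F r / 2)"
    unfolding F_def g_def A_def by (simp add: add.commute)
  show ?thesis unfolding e1 e2 by (rule tendsto_mult_left[OF lim])
qed
end
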